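(* Let $H=\{a_1,\dots,a_7\}$, let $\mathcal R$ be the equivalence relation on $H$ with classes $\{a_1,a_2,a_3\}$ and $\{a_4,a_5,a_6,a_7\}$, let $\mathcal Q$ be the equivalence relation with classes $\{a_1,a_2,a_4,a_5\}$ and $\{a_3,a_6,a_7\}$, and let $\mathcal H=(H;\mathcal R,\mathcal Q,C_{a_1},\dots,C_{a_7})$ with $C_{a}=\{a\}$. Then $\mathcal H$ is $2$-rigid and strongly $2$-rectangular, but not congruence $2$-permutable; in particular $(a_1,a_6)\in\mathcal R\circ_2\mathcal Q$ while $(a_1,a_6)\notin\mathcal Q\circ_2\mathcal R$.
   Context: $\langle\mathcal H\rangle_2$: relations defined by $\exists^{\equiv2}\mathbf y_1\cdots\exists^{\equiv2}\mathbf y_s\,\Phi$ with $\Phi$ a conjunction of atomic formulas over relations of $\mathcal H$ and equality, where $\exists^{\equiv2}\mathbf y\,\Psi(\mathbf x,\mathbf y)$ holds at $\mathbf a$ iff the number of $\mathbf b$ with $\Psi(\mathbf a,\mathbf b)$ is odd. Strongly $2$-rectangular: every relation of arity $\ge2$ in $\langle\mathcal H\rangle_2$ is rectangular (for every split of coordinates into two nonempty parts, $(\mathbf a,\mathbf c),(\mathbf a,\mathbf d),(\mathbf b,\mathbf c)\in\mathcal S$ implies $(\mathbf b,\mathbf d)\in\mathcal S$). For binary relations, $(\mathbf a,\mathbf b)\in\alpha\circ_2\beta$ iff the number of $\mathbf c$ with $(\mathbf a,\mathbf c)\in\alpha,(\mathbf c,\mathbf b)\in\beta$ is odd. A $2$-congruence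 of $\mathcal S\in\langle\mathcal H\rangle_2$ is an equivalence relation on $\mathcal S$ belonging to $\langle\mathcal H\rangle_2$; $\mathcal H$ is congruence $2$-permutable if $\alpha\circ_2\beta=\beta\circ_2\alpha$ for all $2$-congruences $\alpha,\beta$ of every $\mathcal S\in\langle\mathcal H\rangle_2$. $2$-rigid: no automorphism of order 2. *)

theory Defs
  imports Main
begin

text \<open>Relational structures: a carrier set A and a list of relations, each
a set of tuples (lists) over A.  Relation number i of the structure is Rs ! i.\<close>

datatype atom = Rel nat "nat list" | Eq nat nat

text \<open>A primitive positive (conjunctive) formula is a list of atoms over
variables (natural numbers).\<close>

fun atom_vars :: "atom \<Rightarrow> nat set" where
  "atom_vars (Rel i vs) = set vs"
| "atom_vars (Eq i j) = {i, j}"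

definition fvars :: "atom list \<Rightarrow> nat set" where
  "fvars \<Phi> = (\<Union>a\<in>set \<Phi>. atom_vars a)"

fun sat_atom :: "'a list set list \<Rightarrow> (nat \<Rightarrow> 'a) \<Rightarrow> atom \<Rightarrow> bool" where
  "sat_atom Rs \<sigma> (Rel i vs) = (i < length Rs \<and> map \<sigma> vs \<in> Rs ! i)"
| "sat_atom Rs \<sigma> (Eq i j) = (\<sigma> i = \<sigma> j)"

definition sat :: "'a list set list \<Rightarrow> (nat \<Rightarrow> 'a) \<Rightarrow> atom list \<Rightarrow> bool" where
  "sat Rs \<sigma> \<Phi> = (\<forall>a\<in>set \<Phi>. sat_atom Rs \<sigma> a)"

text \<open>The list ks gives the lengths of the
quantified tuples y_1, ..., y_s; the values of all variables already bound
(first the free ones, then y_1, y_2, ...) are in the list as, variable v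
being as ! v.\<close>

fun peval :: "'a set \<Rightarrow> 'a list set list \<Rightarrow> atom list \<Rightarrow> nat list \<Rightarrow> 'a list \<Rightarrow> bool" where
  "peval A Rs \<Phi> [] as = sat Rs (\<lambda>v. as ! v) \<Phi>"
| "peval A Rs \<Phi> (k # ks) as =
     odd (card {bs. length bs = k \<and> set bs \<subseteq> A \<and> peval A Rs \<Phi> ks (as @ bs)})"

text \<open>The n-ary relations of \<langle>H\<rangle>_2: defined by
\<exists>^{\<equiv>2} y_1 ... \<exists>^{\<equiv>2} y_s \<Phi>(x_1..x_n, y_1..y_s).\<close>

definition clone2 :: "'a set \<Rightarrow> 'a list set list \<Rightarrow> nat \<Rightarrow> 'a list set \<Rightarrow> bool" where
  "clone2 A Rs n S \<longleftrightarrow>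
     (\<exists>\<Phi> ks. fvars \<Phi> \<subseteq> {..<n + sum_list ks} \<and>
        S = {as. length as = n \<and> set as \<subseteq> A \<and> peval A Rs \<Phi> ks as})"

definition mix :: "nat \<Rightarrow> nat set \<Rightarrow> 'a list \<Rightarrow> 'a list \<Rightarrow> 'a list" where
  "mix n I x y = map (\<lambda>i. if i \<in> I then x ! i else y ! i) [0..<n]"

definition rectangular :: "nat \<Rightarrow> 'a list set \<Rightarrow> bool" where
  "rectangular n S \<longleftrightarrow>
     (\<forall>I. I \<subseteq> {..<n} \<and> I \<noteq> {} \<and> I \<noteq> {..<n} \<longrightarrow>
       (\<forall>a b c d. length a = n \<and> length b = n \<and> length c = n \<and> length d = n \<longrightarrow>
          mix n I a c \<in> S \<longrightarrow> mix n I a d \<in> S \<longrightarrow> mix n I b c \<in> S \<longrightarrow> mix n I b d \<in> S))"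

definition strongly_2_rectangular :: "'a set \<Rightarrow> 'a list set list \<Rightarrow> bool" where
  "strongly_2_rectangular A Rs \<longleftrightarrow>
     (\<forall>n S. n \<ge> 2 \<longrightarrow> clone2 A Rs n S \<longrightarrow> rectangular n S)"

definition comp2 :: "('b \<times> 'b) set \<Rightarrow> ('b \<times> 'b) set \<Rightarrow> ('b \<times> 'b) set" where
  "comp2 \<alpha> \<beta> = {(a, b). odd (card {c. (a, c) \<in> \<alpha> \<and> (c, b) \<in> \<beta>})}"

text \<open>A binary relation on n-tuples is represented in \<langle>H\<rangle>_2 as a
2n-ary relation (concatenation of the two tuples).\<close>

definition tuple_pairs :: "nat \<Rightarrow> 'a list set \<Rightarrow> ('a list \<times> 'a list) set" where
  "tuple_pairs n T = {(take n l, drop n l) | l. l \<in> T}"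

definition cong2 :: "'a set \<Rightarrow> 'a list set list \<Rightarrow> nat \<Rightarrow> 'a list set \<Rightarrow> ('a list \<times> 'a list) set \<Rightarrow> bool" where
  "cong2 A Rs n S \<alpha> \<longleftrightarrow>
     equiv S \<alpha> \<and> clone2 A Rs (2 * n) {a @ b | a b. (a, b) \<in> \<alpha>}"

definition cong_2_permutable :: "'a set \<Rightarrow> 'a list set list \<Rightarrow> bool" where
  "cong_2_permutable A Rs \<longleftrightarrow>
     (\<forall>n S. clone2 A Rs n S \<longrightarrow>
        (\<forall>\<alpha> \<beta>. cong2 A Rs n S \<alpha> \<and> cong2 A Rs n S \<beta> \<longrightarrow> comp2 \<alpha> \<beta> = comp2 \<beta> \<alpha>))"

definition automorphism :: "'a set \<Rightarrow> 'a list set list \<Rightarrow> ('a \<Rightarrow> 'a) \<Rightarrow> bool" where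
  "automorphism A Rs f \<longleftrightarrow>
     bij_betw f A A \<and> (\<forall>R\<in>set Rs. \<forall>t. set t \<subseteq> A \<longrightarrow> (map f t \<in> R \<longleftrightarrow> t \<in> R))"

definition rigid2 :: "'a set \<Rightarrow> 'a list set list \<Rightarrow> bool" where
  "rigid2 A Rs \<longleftrightarrow>
     \<not> (\<exists>f. automorphism A Rs f \<and> (\<exists>x\<in>A. f x \<noteq> x) \<and> (\<forall>x\<in>A. f (f x) = x))"

text \<open>The concrete structure: a_i is the natural number i, H = {1..7}.\<close>

definition H7 :: "nat set" where "H7 = {1..7}"

definition Rp :: "(nat \<times> nat) set" where
  "Rp = {(x, y). (x \<in> {1,2,3} \<and> y \<in> {1,2,3}) \<or> (x \<in> {4,5,6,7} \<and> y \<in> {4,5,6,7})}"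

definition Qp :: "(nat \<times> nat) set" where
  "Qp = {(x, y). (x \<in> {1,2,4,5} \<and> y \<in> {1,2,4,5}) \<or> (x \<in> {3,6,7} \<and> y \<in> {3,6,7})}"

definition bin_rel :: "(nat \<times> nat) set \<Rightarrow> nat list set" where
  "bin_rel P = {[x, y] | x y. (x, y) \<in> P}"

definition Hrels :: "nat list set list" where
  "Hrels = [bin_rel Rp, bin_rel Qp] @ map (\<lambda>a. {[a]}) [1..<8]"

end

theory Submission
  imports Defs
begin


definition sw :: "nat \<Rightarrow> nat \<Rightarrow> nat" where
 "sw p x = (if p = 0 then (if x=1 then 2 else if x=2 then 1 else x)
   else if p=1 then (if x=4 then 5 else if x=5 then 4 else x)
   else (if x=6 then 7 else if x=7 then 6 else x))"
definition inp :: "nat \<Rightarrow> nat \<Rightarrow> bool" where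
 "inp p x = (if p=0 then x\<in>{1,2} else if p=1 then x\<in>{4,5} else x\<in>{6,7})"

lemma sw_sw[simp]: "sw p (sw p x) = x" by (simp add: sw_def)
lemma inp_sw[simp]: "inp q (sw p x) = inp q x"
  unfolding sw_def inp_def by (cases "p = 0"; cases "p = 1"; cases "q = 0"; cases "q = 1"; simp)
lemma H7_sw[simp]: "(sw p x \<in> H7) = (x \<in> H7)"
  unfolding sw_def H7_def by (cases "p = 0"; cases "p = 1"; simp)
lemma sw_ne: "inp p x \<Longrightarrow> sw p x \<noteq> x"
  unfolding inp_def sw_def by (cases "p = 0"; cases "p = 1"; auto)
lemma inp_3: "\<not> inp p 3" by (simp add: inp_def)
lemma inp_ex: assumes "x \<in> H7" "x \<noteq> 3" shows "\<exists>p. inp p x"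
proof -
  have "x \<in> {1,2} \<or> x \<in> {4,5} \<or> x \<in> {6,7}" using assms unfolding H7_def by auto
  then have "inp 0 x \<or> inp 1 x \<or> inp 2 x" by (simp add: inp_def)
  then show ?thesis by blast
qed
lemma Rp_sw: "((if b1 then sw p x else x, if b2 then sw p y else y) \<in> Rp) = ((x,y) \<in> Rp)"
  unfolding Rp_def sw_def by (cases "p = 0"; cases "p = 1"; cases b1; cases b2; simp)
lemma Qp_sw: "((if b1 then sw p x else x, if b2 then sw p y else y) \<in> Qp) = ((x,y) \<in> Qp)"
  unfolding Qp_def sw_def by (cases "p = 0"; cases "p = 1"; cases b1; cases b2; simp)
lemma Rp_sym: "(x,y) \<in> Rp \<Longrightarrow> (y,x) \<in> Rp" by (auto simp: Rp_def)
lemma Rp_trans: "(x,y) \<in> Rp \<Longrightarrow> (y,z) \<in> Rp \<Longrightarrow> (x,z) \<in> Rp" by (auto simp: Rp_def)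
lemma Qp_sym: "(x,y) \<in> Qp \<Longrightarrow> (y,x) \<in> Qp" by (auto simp: Qp_def)
lemma Qp_trans: "(x,y) \<in> Qp \<Longrightarrow> (y,z) \<in> Qp \<Longrightarrow> (x,z) \<in> Qp" by (auto simp: Qp_def)

lemma Hrels_len[simp]: "length Hrels = 9" by (simp add: Hrels_def)
lemma Hrels_nth: "2 \<le> i \<Longrightarrow> i < 9 \<Longrightarrow> Hrels ! i = {[i-1]}"
proof -
  assume "2 \<le> i" "i < 9"
  then have "i \<in> {2,3,4,5,6,7,8}" by auto
  then show ?thesis by (auto simp: Hrels_def)
qed

lemma map_eq2: "(map \<sigma> vs = [x, y]) = (\<exists>u w. vs = [u,w] \<and> \<sigma> u = x \<and> \<sigma> w = y)"
  by (cases vs; cases "tl vs"; auto)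
lemma map_eq1: "(map \<sigma> vs = [x]) = (\<exists>u. vs = [u] \<and> \<sigma> u = x)"
  by (cases vs; auto)

lemma sat_Rel: "sat_atom Hrels \<sigma> (Rel i vs) \<longleftrightarrow>
   (i=0 \<and> (\<exists>u w. vs=[u,w] \<and> (\<sigma> u, \<sigma> w) \<in> Rp)) \<or> (i=1 \<and> (\<exists>u w. vs=[u,w] \<and> (\<sigma> u, \<sigma> w) \<in> Qp))
   \<or> (2 \<le> i \<and> i < 9 \<and> (\<exists>u. vs=[u] \<and> \<sigma> u = i-1))"
proof (cases "i < 2")
  case True
  then have "i = 0 \<or> i = 1" by auto
  then show ?thesis by (auto simp: Hrels_def bin_rel_def map_eq2)
next
  case False
  then show ?thesis by (auto simp: Hrels_nth map_eq1)
qed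

lemma sat_cong: "(\<forall>v\<in>fvars \<Phi>. \<sigma> v = \<sigma>' v) \<Longrightarrow> sat Rs \<sigma> \<Phi> = sat Rs \<sigma>' \<Phi>"
  unfolding sat_def fvars_def
proof (intro ball_cong refl)
  fix a assume h: "\<forall>v\<in>\<Union>a\<in>set \<Phi>. atom_vars a. \<sigma> v = \<sigma>' v" and a: "a \<in> set \<Phi>"
  then have "\<forall>v\<in>atom_vars a. \<sigma> v = \<sigma>' v" by auto
  then show "sat_atom Rs \<sigma> a = sat_atom Rs \<sigma>' a"
  proof (cases a)
    case (Rel i vs)
    have e: "map \<sigma> vs = map \<sigma>' vs" using Rel \<open>\<forall>v\<in>atom_vars a. \<sigma> v = \<sigma>' v\<close> by simp
    show ?thesis by (simp only: Rel sat_atom.simps e)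
  next
    case (Eq i j)
    then show ?thesis using \<open>\<forall>v\<in>atom_vars a. \<sigma> v = \<sigma>' v\<close> by simp
  qed
qed

lemma sat_atomD: "sat Rs \<sigma> \<Phi> \<Longrightarrow> a \<in> set \<Phi> \<Longrightarrow> sat_atom Rs \<sigma> a" by (simp add: sat_def)
lemma fvarsD: "a \<in> set \<Phi> \<Longrightarrow> v \<in> atom_vars a \<Longrightarrow> v \<in> fvars \<Phi>" by (auto simp: fvars_def)

lemma inv_even: "finite A \<Longrightarrow> (\<forall>x\<in>A. f x \<in> A \<and> f (f x) = x \<and> f x \<noteq> x) \<Longrightarrow> even (card A)"
proof (induction "card A" arbitrary: A rule: less_induct)
  case less
  show ?case
  proof (cases "A = {}")
    case True then show ?thesis by simp
  next
    case False
    then obtain x where x: "x \<in> A" by auto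
    let ?B = "A - {x, f x}"
    have fx: "f x \<in> A" "f x \<noteq> x" using less.prems x by auto
    have s: "{x, f x} \<subseteq> A" using fx x by auto
    have c2: "card {x, f x} = 2" using fx by simp
    have "card {x, f x} \<le> card A" using s less.prems(1) by (rule card_mono[rotated])
    then have cB: "card A = card ?B + 2" using s c2 less.prems(1)
      by (simp add: card_Diff_subset finite_subset)
    have "\<forall>y\<in>?B. f y \<in> ?B \<and> f (f y) = y \<and> f y \<noteq> y"
    proof
      fix y assume y: "y \<in> ?B"
      have P: "f y \<in> A" "f (f y) = y" "f y \<noteq> y" using y less.prems(2) by auto
      have Px: "f (f x) = x" using x less.prems(2) by auto
      have "f y \<noteq> x" using P y by auto
      moreover have "f y \<noteq> f x"
      proof
        assume "f y = f x"
        then have "f (f y) = f (f x)" by simp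
        then have "y = x" using P Px by simp
        then show False using y by simp
      qed
      ultimately show "f y \<in> ?B \<and> f (f y) = y \<and> f y \<noteq> y" using P by auto
    qed
    then have "even (card ?B)" using less cB by auto
    then show ?thesis using cB by simp
  qed
qed


lemma peval_count: "finite A \<Longrightarrow> peval A Rs \<Phi> ks as =
   odd (card {bs. length bs = sum_list ks \<and> set bs \<subseteq> A \<and> sat Rs (\<lambda>v. (as@bs)!v) \<Phi>})"
proof (induction ks arbitrary: as)
  case Nil
  have "{bs. length bs = sum_list [] \<and> set bs \<subseteq> A \<and> sat Rs (\<lambda>v. (as@bs)!v) \<Phi>}
        = (if sat Rs (\<lambda>v. as!v) \<Phi> then {[]} else {})" by auto
  then show ?case by simp
next
  case (Cons k ks)
  define B where "B = {bs. length bs = k \<and> set bs \<subseteq> A}"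
  define T where "T = (\<lambda>bs. {cs. length cs = sum_list ks \<and> set cs \<subseteq> A \<and> sat Rs (\<lambda>v. (as@bs@cs)!v) \<Phi>})"
  have fB: "finite B" unfolding B_def using finite_lists_length_eq[OF Cons.prems, of k]
    by (metis (no_types, lifting) Collect_cong)
  have fT: "finite (T b)" for b
    unfolding T_def by (rule finite_subset[OF _ finite_lists_length_eq[OF Cons.prems, of "sum_list ks"]]) blast
  have L: "peval A Rs \<Phi> (k # ks) as = odd (card {bs\<in>B. odd (card (T bs))})"
    unfolding B_def T_def peval.simps Cons.IH[OF Cons.prems] by simp
  define D where "D = {bs. length bs = sum_list (k#ks) \<and> set bs \<subseteq> A \<and> sat Rs (\<lambda>v. (as@bs)!v) \<Phi>}"
  have DI: "D = (\<lambda>(b,c). b@c) ` (SIGMA b:B. T b)"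
  proof
    show "D \<subseteq> (\<lambda>(b,c). b@c) ` (SIGMA b:B. T b)"
    proof
      fix ds assume d: "ds \<in> D"
      have d1: "length ds = k + sum_list ks" "set ds \<subseteq> A" "sat Rs (\<lambda>v. (as@ds)!v) \<Phi>"
        using d unfolding D_def by auto
      have "take k ds \<in> B" using d1 unfolding B_def by (auto dest: in_set_takeD)
      moreover have "drop k ds \<in> T (take k ds)" using d1 unfolding T_def by (auto dest: in_set_dropD)
      ultimately have "(take k ds, drop k ds) \<in> (SIGMA b:B. T b)" by blast
      moreover have "ds = (\<lambda>(b,c). b@c) (take k ds, drop k ds)" by simp
      ultimately show "ds \<in> (\<lambda>(b,c). b@c) ` (SIGMA b:B. T b)" by (rule rev_image_eqI)
    qed
  next
    show "(\<lambda>(b,c). b@c) ` (SIGMA b:B. T b) \<subseteq> D"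
      unfolding D_def B_def T_def by auto
  qed
  have inj: "inj_on (\<lambda>(b,c). b@c) (SIGMA b:B. T b)"
  proof (rule inj_onI)
    fix x y assume x: "x \<in> (SIGMA b:B. T b)" and y: "y \<in> (SIGMA b:B. T b)"
      and e: "(\<lambda>(b,c). b@c) x = (\<lambda>(b,c). b@c) y"
    obtain b1 c1 where x1: "x = (b1, c1)" by (cases x)
    obtain b2 c2 where y2: "y = (b2, c2)" by (cases y)
    have l: "length b1 = length b2" using x y x1 y2 unfolding B_def by simp
    have "b1 @ c1 = b2 @ c2" using e x1 y2 by simp
    then have "b1 = b2 \<and> c1 = c2" using l by (simp add: append_eq_append_conv)
    then show "x = y" using x1 y2 by simp
  qed
  have "card D = (\<Sum>b\<in>B. card (T b))"
    using DI card_image[OF inj] fB fT by simp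
  then have R: "odd (card D) = odd (card {bs\<in>B. odd (card (T bs))})"
    using even_sum_iff[OF fB, of "\<lambda>b. card (T b)"] by simp
  show ?case using L R unfolding D_def by simp
qed

inductive pin :: "atom list \<Rightarrow> nat \<Rightarrow> nat \<Rightarrow> bool" for \<Phi> :: "atom list" and n :: nat where
  free: "v < n \<Longrightarrow> pin \<Phi> n v"
| const: "Rel i vs \<in> set \<Phi> \<Longrightarrow> 2 \<le> i \<Longrightarrow> v \<in> set vs \<Longrightarrow> pin \<Phi> n v"
| eq1: "Eq i j \<in> set \<Phi> \<Longrightarrow> pin \<Phi> n i \<Longrightarrow> pin \<Phi> n j"
| eq2: "Eq i j \<in> set \<Phi> \<Longrightarrow> pin \<Phi> n j \<Longrightarrow> pin \<Phi> n i"

lemma pin_4: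
  assumes "pin \<Phi> n v" "sat Hrels \<sigma>1 \<Phi>" "sat Hrels \<sigma>2 \<Phi>" "sat Hrels \<sigma>3 \<Phi>"
    "\<forall>j<n. \<sigma>1 j = \<sigma>2 j \<or> \<sigma>1 j = \<sigma>3 j"
  shows "\<sigma>1 v = \<sigma>2 v \<or> \<sigma>1 v = \<sigma>3 v"
  using assms(1)
proof induction
  case (free v)
  then show ?case using assms(5) by auto
next
  case (const i vs v)
  have a1: "sat_atom Hrels \<sigma>1 (Rel i vs)" using sat_atomD[OF assms(2) const(1)] .
  have a2: "sat_atom Hrels \<sigma>2 (Rel i vs)" using sat_atomD[OF assms(3) const(1)] .
  from a1[unfolded sat_Rel] const(2) obtain u where "vs = [u]" "\<sigma>1 u = i - 1" by auto
  moreover from a2[unfolded sat_Rel] const(2) obtain u' where "vs = [u']" "\<sigma>2 u' = i - 1" by auto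
  ultimately show ?case using const(3) by auto
next
  case (eq1 i j)
  have "\<sigma>1 i = \<sigma>1 j" "\<sigma>2 i = \<sigma>2 j" "\<sigma>3 i = \<sigma>3 j"
    using sat_atomD[OF assms(2) eq1(1)] sat_atomD[OF assms(3) eq1(1)] sat_atomD[OF assms(4) eq1(1)] by auto
  then show ?case using eq1 by auto
next
  case (eq2 i j)
  have "\<sigma>1 i = \<sigma>1 j" "\<sigma>2 i = \<sigma>2 j" "\<sigma>3 i = \<sigma>3 j"
    using sat_atomD[OF assms(2) eq2(1)] sat_atomD[OF assms(3) eq2(1)] sat_atomD[OF assms(4) eq2(1)] by auto
  then show ?case using eq2 by auto
qed

definition Uset :: "atom list \<Rightarrow> nat \<Rightarrow> nat \<Rightarrow> nat set" where
  "Uset \<Phi> n K = {v. n \<le> v \<and> v < n + K \<and> \<not> pin \<Phi> n v}"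

lemma sat_swap:
  assumes fv: "fvars \<Phi> \<subseteq> {..<n+K}" and s: "sat Hrels \<sigma> \<Phi>"
  shows "sat Hrels (\<lambda>v. if v \<in> Uset \<Phi> n K then sw p (\<sigma> v) else \<sigma> v) \<Phi>"
  unfolding sat_def
proof
  fix a assume a: "a \<in> set \<Phi>"
  define U where "U = Uset \<Phi> n K"
  define \<sigma>' where "\<sigma>' = (\<lambda>v. if v \<in> U then sw p (\<sigma> v) else \<sigma> v)"
  have sa: "sat_atom Hrels \<sigma> a" using sat_atomD[OF s a] .
  have pinU: "pin \<Phi> n v \<Longrightarrow> v \<notin> U" for v unfolding U_def Uset_def by auto
  have "sat_atom Hrels \<sigma>' a"
  proof (cases a)
    case (Rel i vs)
    have sa': "sat_atom Hrels \<sigma> (Rel i vs)" using sa Rel by simp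
    from sa'[unfolded sat_Rel] show ?thesis
    proof (elim disjE conjE exE)
      fix u w assume r: "i = 0" "vs = [u,w]" "(\<sigma> u, \<sigma> w) \<in> Rp"
      have "(\<sigma>' u, \<sigma>' w) \<in> Rp" unfolding \<sigma>'_def by (simp only: Rp_sw r)
      then show ?thesis using r unfolding Rel sat_Rel by simp
    next
      fix u w assume q: "i = 1" "vs = [u,w]" "(\<sigma> u, \<sigma> w) \<in> Qp"
      have "(\<sigma>' u, \<sigma>' w) \<in> Qp" unfolding \<sigma>'_def by (simp only: Qp_sw q)
      then show ?thesis using q unfolding Rel sat_Rel by simp
    next
      fix u assume c: "2 \<le> i" "i < 9" "vs = [u]" "\<sigma> u = i - 1"
      have "pin \<Phi> n u" using pin.const[of i vs \<Phi> u n] a Rel c by simp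
      then have "\<sigma>' u = \<sigma> u" using pinU unfolding \<sigma>'_def by simp
      then show ?thesis using c unfolding Rel sat_Rel by simp
    qed
  next
    case (Eq i j)
    have eq: "\<sigma> i = \<sigma> j" using sa Eq by simp
    have ij: "i < n + K" "j < n + K" using fv fvarsD[OF a] Eq by auto
    have "(i \<in> U) = (j \<in> U)"
    proof
      assume iU: "i \<in> U"
      show "j \<in> U"
      proof (rule ccontr)
        assume "j \<notin> U"
        then have "pin \<Phi> n j" using ij unfolding U_def Uset_def by (auto intro: pin.free)
        then have "pin \<Phi> n i" using pin.eq2 a Eq by blast
        then show False using pinU iU by blast
      qed
    next
      assume jU: "j \<in> U"
      show "i \<in> U"
      proof (rule ccontr)
        assume "i \<notin> U"
        then have "pin \<Phi> n i" using ij unfolding U_def Uset_def by (auto intro: pin.free)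
        then have "pin \<Phi> n j" using pin.eq1 a Eq by blast
        then show False using pinU jU by blast
      qed
    qed
    then show ?thesis using eq Eq unfolding \<sigma>'_def by simp
  qed
  then show "sat_atom Hrels (\<lambda>v. if v \<in> Uset \<Phi> n K then sw p (\<sigma> v) else \<sigma> v) a"
    unfolding \<sigma>'_def U_def .
qed




definition Sol :: "atom list \<Rightarrow> nat \<Rightarrow> nat list \<Rightarrow> nat list set" where
  "Sol \<Phi> K xs = {ys. length ys = K \<and> set ys \<subseteq> H7 \<and> sat Hrels (\<lambda>v. (xs@ys)!v) \<Phi>}"
definition Res :: "atom list \<Rightarrow> nat \<Rightarrow> nat \<Rightarrow> nat list \<Rightarrow> nat list set" where
  "Res \<Phi> n K xs = {ys \<in> Sol \<Phi> K xs. \<forall>v\<in>Uset \<Phi> n K. (xs@ys)!v = 3}"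
definition iota :: "nat set \<Rightarrow> nat \<Rightarrow> nat list \<Rightarrow> nat list \<Rightarrow> nat list" where
  "iota U n xs ys = (let p = (LEAST p. \<exists>v\<in>U. inp p ((xs@ys)!v)) in
      map (\<lambda>k. if n+k \<in> U then sw p (ys!k) else ys!k) [0..<length ys])"

lemma Uset_bounds: "v \<in> Uset \<Phi> n K \<Longrightarrow> n \<le> v \<and> v < n+K"
  by (simp add: Uset_def)

lemma finite_H7: "finite H7" by (simp add: H7_def)

lemma nth_iota:
  assumes "length xs = n" "\<forall>v\<in>U. n \<le> v" "v < n + length ys"
  shows "(xs @ iota U n xs ys)!v = (if v \<in> U then sw (LEAST p. \<exists>v\<in>U. inp p ((xs@ys)!v)) ((xs@ys)!v) else (xs@ys)!v)"
proof (cases "v < n")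
  case True
  then have "v \<notin> U" using assms(2) by auto
  then show ?thesis using True assms(1) by (simp add: nth_append)
next
  case False
  then have "n + (v - n) = v" "v - n < length ys" using assms(3) by auto
  then show ?thesis using False assms(1) by (simp add: nth_append iota_def Let_def)
qed

lemma length_iota[simp]: "length (iota U n xs ys) = length ys"
  by (simp add: iota_def Let_def)

lemma iota_props:
  assumes fv: "fvars \<Phi> \<subseteq> {..<n+K}" and lx: "length xs = n"
    and ys: "ys \<in> Sol \<Phi> K xs - Res \<Phi> n K xs"
  shows "iota (Uset \<Phi> n K) n xs ys \<in> Sol \<Phi> K xs - Res \<Phi> n K xs
     \<and> iota (Uset \<Phi> n K) n xs (iota (Uset \<Phi> n K) n xs ys) = ys
     \<and> iota (Uset \<Phi> n K) n xs ys \<noteq> ys"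
proof -
  define U where "U = Uset \<Phi> n K"
  define \<sigma> where "\<sigma> = (\<lambda>v. (xs@ys)!v)"
  define P where "P = (\<lambda>p. \<exists>v\<in>U. inp p (\<sigma> v))"
  define p where "p = (LEAST p. P p)"
  define ys' where "ys' = iota U n xs ys"
  define \<sigma>' where "\<sigma>' = (\<lambda>v. (xs@ys')!v)"
  have Un: "\<forall>v\<in>U. n \<le> v" and UK: "\<forall>v\<in>U. v < n + K" using Uset_bounds unfolding U_def by auto
  have lys: "length ys = K" and sH: "set ys \<subseteq> H7" and sat0: "sat Hrels \<sigma> \<Phi>"
    using ys unfolding Sol_def \<sigma>_def by auto
  obtain v0 where v0: "v0 \<in> U" "\<sigma> v0 \<noteq> 3"
    using ys unfolding Res_def U_def \<sigma>_def by auto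
  have "n \<le> v0" using v0 Un by auto
  then have "\<sigma> v0 = ys ! (v0 - n)" using lx unfolding \<sigma>_def by (simp add: nth_append)
  moreover have "v0 - n < length ys" using v0 Un UK lys by force
  ultimately have "\<sigma> v0 \<in> H7" using sH by (metis nth_mem subsetD)
  then obtain q where "inp q (\<sigma> v0)" using inp_ex v0(2) by blast
  then have "P q" using v0 unfolding P_def by blast
  then have Pp: "P p" unfolding p_def by (rule LeastI)
  then obtain v1 where v1: "v1 \<in> U" "inp p (\<sigma> v1)" unfolding P_def by blast
  have lys': "length ys' = K" unfolding ys'_def using lys by simp
  have s': "\<And>v. v < n + K \<Longrightarrow> \<sigma>' v = (if v \<in> U then sw p (\<sigma> v) else \<sigma> v)"
    unfolding \<sigma>'_def \<sigma>_def ys'_def p_def P_def using nth_iota[OF lx Un] lys by simp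
  have sat1: "sat Hrels \<sigma>' \<Phi>"
  proof -
    have "sat Hrels (\<lambda>v. if v \<in> U then sw p (\<sigma> v) else \<sigma> v) \<Phi>"
      unfolding U_def by (rule sat_swap[OF fv sat0])
    moreover have eqs: "\<forall>v\<in>fvars \<Phi>. \<sigma>' v = (if v \<in> U then sw p (\<sigma> v) else \<sigma> v)"
      using fv s' by auto
    have "sat Hrels \<sigma>' \<Phi> = sat Hrels (\<lambda>v. if v \<in> U then sw p (\<sigma> v) else \<sigma> v) \<Phi>"
      by (rule sat_cong[OF eqs])
    ultimately show ?thesis by blast
  qed
  have ys'k: "\<And>k. k < K \<Longrightarrow> ys' ! k = (if n + k \<in> U then sw p (ys!k) else ys!k)"
    unfolding ys'_def iota_def Let_def p_def P_def \<sigma>_def using lys by simp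
  have sH': "set ys' \<subseteq> H7"
  proof
    fix y assume "y \<in> set ys'"
    then obtain k where k: "k < K" "y = ys' ! k" using lys' by (metis in_set_conv_nth)
    have "ys ! k \<in> H7" using sH k lys by (metis nth_mem subsetD)
    then show "y \<in> H7" using k ys'k by simp
  qed
  have v1K: "v1 < n + K" using v1 UK by auto
  have "\<sigma>' v1 = sw p (\<sigma> v1)" using s'[OF v1K] v1 by simp
  then have n3: "\<sigma>' v1 \<noteq> 3" and ne1: "\<sigma>' v1 \<noteq> \<sigma> v1" using v1 inp_3 sw_ne by (metis inp_sw)+
  have in1: "ys' \<in> Sol \<Phi> K xs - Res \<Phi> n K xs"
    using lys' sH' sat1 n3 v1 unfolding Sol_def Res_def \<sigma>'_def U_def by auto
  have PP: "(\<lambda>q. \<exists>v\<in>U. inp q (\<sigma>' v)) = P"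
  proof
    fix q show "(\<exists>v\<in>U. inp q (\<sigma>' v)) = P q"
      unfolding P_def using s' UK by auto
  qed
  have pp: "(LEAST q. \<exists>v\<in>U. inp q ((xs@ys')!v)) = p"
    using PP unfolding \<sigma>'_def p_def by simp
  have bk: "iota U n xs ys' = ys"
  proof (rule nth_equalityI)
    show "length (iota U n xs ys') = length ys" using lys lys' by simp
  next
    fix k assume "k < length (iota U n xs ys')"
    then have k: "k < K" using lys' by simp
    have "iota U n xs ys' ! k = (if n + k \<in> U then sw p (ys'!k) else ys'!k)"
      unfolding iota_def Let_def pp using k lys' by simp
    then show "iota U n xs ys' ! k = ys ! k" using ys'k[OF k] by simp
  qed
  have "ys' \<noteq> ys" using ne1 unfolding \<sigma>'_def \<sigma>_def by auto
  then show ?thesis using in1 bk unfolding ys'_def U_def by simp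
qed




lemma Res_unique:
  assumes lx: "length xs = n" and y1: "y1 \<in> Res \<Phi> n K xs" and y2: "y2 \<in> Res \<Phi> n K xs"
  shows "y1 = y2"
proof (rule nth_equalityI)
  have l1: "length y1 = K" and l2: "length y2 = K" using y1 y2 unfolding Res_def Sol_def by auto
  then show "length y1 = length y2" by simp
  have s1: "sat Hrels (\<lambda>v. (xs@y1)!v) \<Phi>" and s2: "sat Hrels (\<lambda>v. (xs@y2)!v) \<Phi>"
    using y1 y2 unfolding Res_def Sol_def by auto
  fix k assume "k < length y1"
  then have k: "k < K" using l1 by simp
  have e1: "(xs@y1)!(n+k) = y1!k" and e2: "(xs@y2)!(n+k) = y2!k" using lx by (simp_all add: nth_append)
  show "y1 ! k = y2 ! k"
  proof (cases "n + k \<in> Uset \<Phi> n K")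
    case True
    then have "(xs@y1)!(n+k) = 3" "(xs@y2)!(n+k) = 3" using y1 y2 unfolding Res_def by auto
    then show ?thesis using e1 e2 by simp
  next
    case False
    then have "pin \<Phi> n (n+k)" using k unfolding Uset_def by simp
    moreover have "\<forall>j<n. (xs@y1)!j = (xs@y2)!j \<or> (xs@y1)!j = (xs@y2)!j"
      using lx by (simp add: nth_append)
    ultimately have "(xs@y1)!(n+k) = (xs@y2)!(n+k)"
      using pin_4[OF _ s1 s2 s2] by blast
    then show ?thesis using e1 e2 by simp
  qed
qed

lemma parity_Res:
  assumes fv: "fvars \<Phi> \<subseteq> {..<n+K}" and lx: "length xs = n"
  shows "odd (card (Sol \<Phi> K xs)) \<longleftrightarrow> Res \<Phi> n K xs \<noteq> {}"
proof -
  define S where "S = Sol \<Phi> K xs"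
  define R where "R = Res \<Phi> n K xs"
  have fS: "finite S"
    unfolding S_def Sol_def
    by (rule finite_subset[OF _ finite_lists_length_eq[OF finite_H7, of K]]) blast
  have RS: "R \<subseteq> S" unfolding R_def S_def Res_def by blast
  have fR: "finite R" using finite_subset[OF RS fS] .
  have ev: "even (card (S - R))"
  proof (rule inv_even[where f = "iota (Uset \<Phi> n K) n xs"])
    show "finite (S - R)" using fS by simp
    show "\<forall>x\<in>S - R. iota (Uset \<Phi> n K) n xs x \<in> S - R \<and>
        iota (Uset \<Phi> n K) n xs (iota (Uset \<Phi> n K) n xs x) = x \<and> iota (Uset \<Phi> n K) n xs x \<noteq> x"
      using iota_props[OF fv lx] unfolding S_def R_def by blast
  qed
  have cS: "card S = card (S - R) + card R"
    using card_Diff_subset[OF fR RS] card_mono[OF fS RS] by simp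
  have cR: "card R = (if R = {} then 0 else 1)"
  proof (cases "R = {}")
    case False
    then obtain y where y: "y \<in> R" by auto
    then have "R = {y}" using Res_unique[OF lx] unfolding R_def by blast
    then show ?thesis by simp
  qed simp
  show ?thesis using ev cS cR unfolding S_def[symmetric] R_def[symmetric] by auto
qed

lemma clone2_char:
  assumes "clone2 H7 Hrels n S"
  shows "\<exists>\<Phi> K. fvars \<Phi> \<subseteq> {..<n+K} \<and> S = {xs. length xs = n \<and> set xs \<subseteq> H7 \<and> Res \<Phi> n K xs \<noteq> {}}"
proof -
  obtain \<Phi> ks where fv: "fvars \<Phi> \<subseteq> {..<n + sum_list ks}"
    and S: "S = {as. length as = n \<and> set as \<subseteq> H7 \<and> peval H7 Hrels \<Phi> ks as}"
    using assms unfolding clone2_def by blast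
  have "\<And>as. length as = n \<Longrightarrow> peval H7 Hrels \<Phi> ks as = (Res \<Phi> n (sum_list ks) as \<noteq> {})"
  proof -
    fix as :: "nat list" assume la: "length as = n"
    have "peval H7 Hrels \<Phi> ks as = odd (card (Sol \<Phi> (sum_list ks) as))"
      unfolding Sol_def by (rule peval_count[OF finite_H7])
    also have "\<dots> = (Res \<Phi> n (sum_list ks) as \<noteq> {})" by (rule parity_Res[OF fv la])
    finally show "peval H7 Hrels \<Phi> ks as = (Res \<Phi> n (sum_list ks) as \<noteq> {})" .
  qed
  then have "S = {xs. length xs = n \<and> set xs \<subseteq> H7 \<and> Res \<Phi> n (sum_list ks) xs \<noteq> {}}"
    unfolding S by blast
  then show ?thesis using fv by blast
qed




lemma E4:
  assumes sym: "\<And>x y. E x y \<Longrightarrow> E y x" and tr: "\<And>x y z. E x y \<Longrightarrow> E y z \<Longrightarrow> E x z"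
    and h1: "E (\<sigma>1 u) (\<sigma>1 w)" and h2: "E (\<sigma>2 u) (\<sigma>2 w)" and h3: "E (\<sigma>3 u) (\<sigma>3 w)"
    and pu: "\<sigma>1 u = \<sigma>2 u \<or> \<sigma>1 u = \<sigma>3 u" and pw: "\<sigma>1 w = \<sigma>2 w \<or> \<sigma>1 w = \<sigma>3 w"
  shows "E (if \<sigma>1 u = \<sigma>2 u then \<sigma>3 u else \<sigma>2 u) (if \<sigma>1 w = \<sigma>2 w then \<sigma>3 w else \<sigma>2 w)"
proof (cases "\<sigma>1 u = \<sigma>2 u")
  case cu: True
  show ?thesis
  proof (cases "\<sigma>1 w = \<sigma>2 w")
    case True then show ?thesis using cu h3 by simp
  next
    case False
    then have w3: "\<sigma>1 w = \<sigma>3 w" using pw by simp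
    have "E (\<sigma>3 u) (\<sigma>1 w)" using h3 w3 by simp
    moreover have "E (\<sigma>1 w) (\<sigma>2 u)" using sym[OF h1] cu by simp
    ultimately have "E (\<sigma>3 u) (\<sigma>2 u)" by (rule tr)
    then have "E (\<sigma>3 u) (\<sigma>2 w)" using h2 tr by blast
    then show ?thesis using cu False by simp
  qed
next
  case cu: False
  then have u3: "\<sigma>1 u = \<sigma>3 u" using pu by simp
  show ?thesis
  proof (cases "\<sigma>1 w = \<sigma>2 w")
    case True
    have "E (\<sigma>2 u) (\<sigma>1 w)" using h2 True by simp
    moreover have "E (\<sigma>1 w) (\<sigma>3 u)" using sym[OF h1] u3 by simp
    ultimately have "E (\<sigma>2 u) (\<sigma>3 u)" by (rule tr)
    then have "E (\<sigma>2 u) (\<sigma>3 w)" using h3 tr by blast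
    then show ?thesis using cu True by simp
  next
    case False then show ?thesis using cu h2 by simp
  qed
qed

lemma sat4:
  assumes s1: "sat Hrels \<sigma>1 \<Phi>" and s2: "sat Hrels \<sigma>2 \<Phi>" and s3: "sat Hrels \<sigma>3 \<Phi>"
    and pv: "\<forall>v\<in>fvars \<Phi>. \<sigma>1 v = \<sigma>2 v \<or> \<sigma>1 v = \<sigma>3 v"
  shows "sat Hrels (\<lambda>v. if \<sigma>1 v = \<sigma>2 v then \<sigma>3 v else \<sigma>2 v) \<Phi>"
  unfolding sat_def
proof
  fix a assume a: "a \<in> set \<Phi>"
  define \<sigma>4 where "\<sigma>4 = (\<lambda>v. if \<sigma>1 v = \<sigma>2 v then \<sigma>3 v else \<sigma>2 v)"
  have a1: "sat_atom Hrels \<sigma>1 a" and a2: "sat_atom Hrels \<sigma>2 a" and a3: "sat_atom Hrels \<sigma>3 a"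
    using sat_atomD[OF s1 a] sat_atomD[OF s2 a] sat_atomD[OF s3 a] by auto
  have pa: "\<And>v. v \<in> atom_vars a \<Longrightarrow> \<sigma>1 v = \<sigma>2 v \<or> \<sigma>1 v = \<sigma>3 v"
    using pv fvarsD[OF a] by blast
  have "sat_atom Hrels \<sigma>4 a"
  proof (cases a)
    case (Eq i j)
    have "\<sigma>4 i = \<sigma>4 j" unfolding \<sigma>4_def
    proof (rule E4[where E = "(=)"])
      show "\<sigma>1 i = \<sigma>1 j" using a1 Eq by simp
      show "\<sigma>2 i = \<sigma>2 j" using a2 Eq by simp
      show "\<sigma>3 i = \<sigma>3 j" using a3 Eq by simp
      show "\<sigma>1 i = \<sigma>2 i \<or> \<sigma>1 i = \<sigma>3 i" using pa Eq by simp
      show "\<sigma>1 j = \<sigma>2 j \<or> \<sigma>1 j = \<sigma>3 j" using pa Eq by simp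
    qed simp_all
    then show ?thesis using Eq by simp
  next
    case (Rel i vs)
    have b1: "sat_atom Hrels \<sigma>1 (Rel i vs)" and b2: "sat_atom Hrels \<sigma>2 (Rel i vs)"
      and b3: "sat_atom Hrels \<sigma>3 (Rel i vs)" using a1 a2 a3 Rel by simp_all
    have pvs: "\<And>v. v \<in> set vs \<Longrightarrow> \<sigma>1 v = \<sigma>2 v \<or> \<sigma>1 v = \<sigma>3 v" using pa Rel by simp
    from b1[unfolded sat_Rel] show ?thesis
    proof (elim disjE conjE exE)
      fix u w assume r: "i = 0" "vs = [u,w]" "(\<sigma>1 u, \<sigma>1 w) \<in> Rp"
      have r2: "(\<sigma>2 u, \<sigma>2 w) \<in> Rp" using b2[unfolded sat_Rel] r(1,2) by simp
      have r3: "(\<sigma>3 u, \<sigma>3 w) \<in> Rp" using b3[unfolded sat_Rel] r(1,2) by simp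
      have "(\<sigma>4 u, \<sigma>4 w) \<in> Rp" unfolding \<sigma>4_def
      proof (rule E4[where E = "\<lambda>x y. (x,y) \<in> Rp"])
        show "\<sigma>1 u = \<sigma>2 u \<or> \<sigma>1 u = \<sigma>3 u" using pvs r(2) by simp
        show "\<sigma>1 w = \<sigma>2 w \<or> \<sigma>1 w = \<sigma>3 w" using pvs r(2) by simp
      qed (fact Rp_sym Rp_trans r(3) r2 r3)+
      then show ?thesis using r unfolding Rel sat_Rel by simp
    next
      fix u w assume r: "i = 1" "vs = [u,w]" "(\<sigma>1 u, \<sigma>1 w) \<in> Qp"
      have r2: "(\<sigma>2 u, \<sigma>2 w) \<in> Qp" using b2[unfolded sat_Rel] r(1,2) by simp
      have r3: "(\<sigma>3 u, \<sigma>3 w) \<in> Qp" using b3[unfolded sat_Rel] r(1,2) by simp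
      have "(\<sigma>4 u, \<sigma>4 w) \<in> Qp" unfolding \<sigma>4_def
      proof (rule E4[where E = "\<lambda>x y. (x,y) \<in> Qp"])
        show "\<sigma>1 u = \<sigma>2 u \<or> \<sigma>1 u = \<sigma>3 u" using pvs r(2) by simp
        show "\<sigma>1 w = \<sigma>2 w \<or> \<sigma>1 w = \<sigma>3 w" using pvs r(2) by simp
      qed (fact Qp_sym Qp_trans r(3) r2 r3)+
      then show ?thesis using r unfolding Rel sat_Rel by simp
    next
      fix u assume c: "2 \<le> i" "i < 9" "vs = [u]" "\<sigma>1 u = i - 1"
      have c2: "\<sigma>2 u = i - 1" using b2[unfolded sat_Rel] c(1,3) by auto
      have c3: "\<sigma>3 u = i - 1" using b3[unfolded sat_Rel] c(1,3) by auto
      have "\<sigma>4 u = i - 1" unfolding \<sigma>4_def using c2 c3 by simp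
      then show ?thesis using c unfolding Rel sat_Rel by simp
    qed
  qed
  then show "sat_atom Hrels (\<lambda>v. if \<sigma>1 v = \<sigma>2 v then \<sigma>3 v else \<sigma>2 v) a" unfolding \<sigma>4_def .
qed




lemma nth_mix: "j < n \<Longrightarrow> mix n I x y ! j = (if j \<in> I then x!j else y!j)"
  by (simp add: mix_def)
lemma length_mix[simp]: "length (mix n I x y) = n"
  by (simp add: mix_def)

lemma rect_Res:
  assumes fv: "fvars \<Phi> \<subseteq> {..<n+K}"
  shows "rectangular n {xs. length xs = n \<and> set xs \<subseteq> H7 \<and> Res \<Phi> n K xs \<noteq> {}}"
  unfolding rectangular_def
proof (intro allI impI)
  fix I a b c d
  define S where "S = {xs. length xs = n \<and> set xs \<subseteq> H7 \<and> Res \<Phi> n K xs \<noteq> {}}"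
  assume h1: "mix n I a c \<in> {xs. length xs = n \<and> set xs \<subseteq> H7 \<and> Res \<Phi> n K xs \<noteq> {}}"
    and h2: "mix n I a d \<in> {xs. length xs = n \<and> set xs \<subseteq> H7 \<and> Res \<Phi> n K xs \<noteq> {}}"
    and h3: "mix n I b c \<in> {xs. length xs = n \<and> set xs \<subseteq> H7 \<and> Res \<Phi> n K xs \<noteq> {}}"
  define x1 where "x1 = mix n I a c"
  define x2 where "x2 = mix n I a d"
  define x3 where "x3 = mix n I b c"
  define x4 where "x4 = mix n I b d"
  define U where "U = Uset \<Phi> n K"
  obtain y1 where y1: "y1 \<in> Res \<Phi> n K x1" using h1 unfolding x1_def by auto
  obtain y2 where y2: "y2 \<in> Res \<Phi> n K x2" using h2 unfolding x2_def by auto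
  obtain y3 where y3: "y3 \<in> Res \<Phi> n K x3" using h3 unfolding x3_def by auto
  have sx2: "set x2 \<subseteq> H7" using h2 unfolding x2_def by auto
  have sx3: "set x3 \<subseteq> H7" using h3 unfolding x3_def by auto
  have l1: "length y1 = K" and l2: "length y2 = K" and l3: "length y3 = K"
    using y1 y2 y3 unfolding Res_def Sol_def by auto
  have sy2: "set y2 \<subseteq> H7" and sy3: "set y3 \<subseteq> H7"
    using y2 y3 unfolding Res_def Sol_def by auto
  define \<sigma>1 where "\<sigma>1 = (\<lambda>v. (x1@y1)!v)"
  define \<sigma>2 where "\<sigma>2 = (\<lambda>v. (x2@y2)!v)"
  define \<sigma>3 where "\<sigma>3 = (\<lambda>v. (x3@y3)!v)"
  have s1: "sat Hrels \<sigma>1 \<Phi>" using y1 unfolding Res_def Sol_def \<sigma>1_def by auto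
  have s2: "sat Hrels \<sigma>2 \<Phi>" using y2 unfolding Res_def Sol_def \<sigma>2_def by auto
  have s3: "sat Hrels \<sigma>3 \<Phi>" using y3 unfolding Res_def Sol_def \<sigma>3_def by auto
  have U1: "\<forall>v\<in>U. \<sigma>1 v = 3" using y1 unfolding Res_def \<sigma>1_def U_def by auto
  have U2: "\<forall>v\<in>U. \<sigma>2 v = 3" using y2 unfolding Res_def \<sigma>2_def U_def by auto
  have U3: "\<forall>v\<in>U. \<sigma>3 v = 3" using y3 unfolding Res_def \<sigma>3_def U_def by auto
  define y4 where "y4 = map (\<lambda>k. if y1!k = y2!k then y3!k else y2!k) [0..<K]"
  define \<sigma>4 where "\<sigma>4 = (\<lambda>v. if \<sigma>1 v = \<sigma>2 v then \<sigma>3 v else \<sigma>2 v)"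
  have l4: "length y4 = K" unfolding y4_def by simp
  have lo: "\<And>j. j < n \<Longrightarrow> \<sigma>1 j = (if j \<in> I then a!j else c!j) \<and> \<sigma>2 j = (if j \<in> I then a!j else d!j)
     \<and> \<sigma>3 j = (if j \<in> I then b!j else c!j) \<and> (x4@y4)!j = (if j \<in> I then b!j else d!j)"
    unfolding \<sigma>1_def \<sigma>2_def \<sigma>3_def x1_def x2_def x3_def x4_def by (simp add: nth_append nth_mix)
  have hi: "\<And>v. n \<le> v \<Longrightarrow> v < n + K \<Longrightarrow> \<sigma>1 v = y1!(v-n) \<and> \<sigma>2 v = y2!(v-n) \<and> \<sigma>3 v = y3!(v-n)
     \<and> (x4@y4)!v = (if y1!(v-n) = y2!(v-n) then y3!(v-n) else y2!(v-n))"
    unfolding \<sigma>1_def \<sigma>2_def \<sigma>3_def x1_def x2_def x3_def x4_def y4_def by (simp add: nth_append)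
  have E: "\<And>v. v < n + K \<Longrightarrow> (x4@y4)!v = \<sigma>4 v"
  proof -
    fix v assume v: "v < n + K"
    show "(x4@y4)!v = \<sigma>4 v"
    proof (cases "v < n")
      case True then show ?thesis using lo[OF True] unfolding \<sigma>4_def by auto
    next
      case False then show ?thesis using hi[of v] v unfolding \<sigma>4_def by simp
    qed
  qed
  have free: "\<forall>j<n. \<sigma>1 j = \<sigma>2 j \<or> \<sigma>1 j = \<sigma>3 j" using lo by simp
  have pv: "\<forall>v\<in>fvars \<Phi>. \<sigma>1 v = \<sigma>2 v \<or> \<sigma>1 v = \<sigma>3 v"
  proof
    fix v assume "v \<in> fvars \<Phi>"
    then have v: "v < n + K" using fv by auto
    show "\<sigma>1 v = \<sigma>2 v \<or> \<sigma>1 v = \<sigma>3 v"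
    proof (cases "v < n")
      case True then show ?thesis using free by simp
    next
      case False
      show ?thesis
      proof (cases "v \<in> U")
        case True then show ?thesis using U1 U2 by simp
      next
        case nU: False
        then have "pin \<Phi> n v" using v False unfolding U_def Uset_def by simp
        then show ?thesis using pin_4[OF _ s1 s2 s3 free] by blast
      qed
    qed
  qed
  have s4: "sat Hrels \<sigma>4 \<Phi>" unfolding \<sigma>4_def by (rule sat4[OF s1 s2 s3 pv])
  have eqs: "\<forall>v\<in>fvars \<Phi>. (x4@y4)!v = \<sigma>4 v" using E fv by auto
  have "sat Hrels (\<lambda>v. (x4@y4)!v) \<Phi> = sat Hrels \<sigma>4 \<Phi>" by (rule sat_cong[OF eqs])
  then have s4': "sat Hrels (\<lambda>v. (x4@y4)!v) \<Phi>" using s4 by blast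
  have sy4: "set y4 \<subseteq> H7"
  proof
    fix y assume "y \<in> set y4"
    then obtain k where k: "k < K" "y = y4 ! k" using l4 by (metis in_set_conv_nth)
    have "y2 ! k \<in> H7" "y3 ! k \<in> H7" using sy2 sy3 k l2 l3 by (metis nth_mem subsetD)+
    then show "y \<in> H7" using k unfolding y4_def by simp
  qed
  have U4: "\<forall>v\<in>Uset \<Phi> n K. (x4@y4)!v = 3"
  proof
    fix v assume vU: "v \<in> Uset \<Phi> n K"
    then have "v < n + K" using Uset_bounds by blast
    then show "(x4@y4)!v = 3" using E U1 U2 U3 vU unfolding \<sigma>4_def U_def by simp
  qed
  have "y4 \<in> Res \<Phi> n K x4" using l4 sy4 s4' U4 unfolding Res_def Sol_def by simp
  moreover have "set x4 \<subseteq> H7"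
  proof
    fix z assume "z \<in> set x4"
    then obtain j where j: "j < n" "z = x4 ! j" unfolding x4_def by (metis in_set_conv_nth length_mix)
    have "x2 ! j \<in> H7" "x3 ! j \<in> H7" using sx2 sx3 j unfolding x2_def x3_def
      by (metis length_mix nth_mem subsetD)+
    then show "z \<in> H7" using j unfolding x2_def x3_def x4_def by (cases "j \<in> I") (simp_all add: nth_mix)
  qed
  ultimately show "mix n I b d \<in> {xs. length xs = n \<and> set xs \<subseteq> H7 \<and> Res \<Phi> n K xs \<noteq> {}}"
    unfolding x4_def by auto
qed

lemma strong: "strongly_2_rectangular H7 Hrels"
  unfolding strongly_2_rectangular_def
proof (intro allI impI)
  fix n S assume "clone2 H7 Hrels n S"
  then obtain \<Phi> K where "fvars \<Phi> \<subseteq> {..<n+K}"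
    "S = {xs. length xs = n \<and> set xs \<subseteq> H7 \<and> Res \<Phi> n K xs \<noteq> {}}"
    using clone2_char by blast
  then show "rectangular n S" using rect_Res by simp
qed




lemma rigid: "rigid2 H7 Hrels"
  unfolding rigid2_def
proof
  assume "\<exists>f. automorphism H7 Hrels f \<and> (\<exists>x\<in>H7. f x \<noteq> x) \<and> (\<forall>x\<in>H7. f (f x) = x)"
  then obtain f x where f: "automorphism H7 Hrels f" and x: "x \<in> H7" "f x \<noteq> x" by blast
  have "x \<in> set [1..<8]" using x unfolding H7_def by auto
  then have "{[x]} \<in> set Hrels" unfolding Hrels_def by auto
  moreover have "set [x] \<subseteq> H7" using x by simp
  ultimately have "(map f [x] \<in> {[x]}) = ([x] \<in> {[x]})" using f unfolding automorphism_def by blast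
  then have "f x = x" by simp
  then show False using x by simp
qed

lemma Rp_H7: "(x,y) \<in> Rp \<Longrightarrow> x \<in> H7 \<and> y \<in> H7" unfolding Rp_def H7_def by auto
lemma Qp_H7: "(x,y) \<in> Qp \<Longrightarrow> x \<in> H7 \<and> y \<in> H7" unfolding Qp_def H7_def by auto
lemma Rp_refl: "x \<in> H7 \<Longrightarrow> (x,x) \<in> Rp"
proof -
  assume "x \<in> H7"
  then have "x \<in> {1,2,3} \<or> x \<in> {4,5,6,7}" unfolding H7_def by auto
  then show ?thesis unfolding Rp_def by blast
qed
lemma Qp_refl: "x \<in> H7 \<Longrightarrow> (x,x) \<in> Qp"
proof -
  assume "x \<in> H7"
  then have "x \<in> {1,2,4,5} \<or> x \<in> {3,6,7}" unfolding H7_def by auto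
  then show ?thesis unfolding Qp_def by blast
qed

definition lift :: "(nat \<times> nat) set \<Rightarrow> (nat list \<times> nat list) set" where
  "lift P = {([x],[y]) | x y. (x,y) \<in> P}"

lemma S1_clone: "clone2 H7 Hrels 1 {as. length as = 1 \<and> set as \<subseteq> H7}"
  unfolding clone2_def
  by (rule exI[of _ "[]"], rule exI[of _ "[]"]) (simp add: fvars_def sat_def)

lemma lift_clone:
  assumes i: "i < 2" and Pi: "Hrels ! i = bin_rel P" and PH: "\<And>x y. (x,y) \<in> P \<Longrightarrow> x \<in> H7 \<and> y \<in> H7"
  shows "clone2 H7 Hrels (2 * 1) {a @ b | a b. (a, b) \<in> lift P}"
  unfolding clone2_def
proof (rule exI[of _ "[Rel i [0,1]]"], rule exI[of _ "[]"], intro conjI)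
  show "fvars [Rel i [0, 1]] \<subseteq> {..<2 * 1 + sum_list []}" by (auto simp: fvars_def)
  show "{a @ b |a b. (a, b) \<in> lift P} =
    {as. length as = 2 * 1 \<and> set as \<subseteq> H7 \<and> peval H7 Hrels [Rel i [0, 1]] [] as}"
  proof
    show "{a @ b |a b. (a, b) \<in> lift P} \<subseteq> {as. length as = 2 * 1 \<and> set as \<subseteq> H7 \<and> peval H7 Hrels [Rel i [0, 1]] [] as}"
      using i PH by (auto simp: lift_def sat_def Pi bin_rel_def)
  next
    show "{as. length as = 2 * 1 \<and> set as \<subseteq> H7 \<and> peval H7 Hrels [Rel i [0, 1]] [] as} \<subseteq> {a @ b |a b. (a, b) \<in> lift P}"
    proof
      fix as assume as: "as \<in> {as. length as = 2 * 1 \<and> set as \<subseteq> H7 \<and> peval H7 Hrels [Rel i [0, 1]] [] as}"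
      then have l: "length as = 2" by simp
      then obtain x y where xy: "as = [x, y]"
        by (auto simp: length_Suc_conv numeral_2_eq_2)
      have "(x, y) \<in> P" using as xy i by (simp add: sat_def Pi bin_rel_def)
      then have "([x],[y]) \<in> lift P" by (auto simp: lift_def)
      moreover have "as = [x] @ [y]" using xy by simp
      ultimately show "as \<in> {a @ b |a b. (a, b) \<in> lift P}" by blast
    qed
  qed
qed


lemma lift_equiv:
  assumes PH: "\<And>x y. (x,y) \<in> P \<Longrightarrow> x \<in> H7 \<and> y \<in> H7"
    and refl: "\<And>x. x \<in> H7 \<Longrightarrow> (x,x) \<in> P"
    and sym: "\<And>x y. (x,y) \<in> P \<Longrightarrow> (y,x) \<in> P"
    and tr: "\<And>x y z. (x,y) \<in> P \<Longrightarrow> (y,z) \<in> P \<Longrightarrow> (x,z) \<in> P"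
  shows "equiv {as. length as = 1 \<and> set as \<subseteq> H7} (lift P)"
proof (rule equivI)
  show "lift P \<subseteq> {as. length as = 1 \<and> set as \<subseteq> H7} \<times> {as. length as = 1 \<and> set as \<subseteq> H7}"
    unfolding lift_def using PH by auto
  show "refl_on {as. length as = 1 \<and> set as \<subseteq> H7} (lift P)"
  proof (rule refl_onI)
    fix as assume "as \<in> {as. length as = 1 \<and> set as \<subseteq> H7}"
    then obtain x where "as = [x]" "x \<in> H7" by (auto simp: length_Suc_conv)
    then show "(as, as) \<in> lift P" unfolding lift_def using refl by auto
  qed
  show "sym (lift P)" unfolding lift_def using sym by (auto intro!: symI)
  show "trans (lift P)" unfolding lift_def using tr by (auto intro!: transI)
qed

lemma cRQ: "{c. (1, c) \<in> Rp \<and> (c, 6) \<in> Qp} = {3::nat}" unfolding Rp_def Qp_def by auto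
lemma cQR: "{c. (1, c) \<in> Qp \<and> (c, 6) \<in> Rp} = {4, 5::nat}" unfolding Rp_def Qp_def by auto

lemma lift_comp: "{c. ([x], c) \<in> lift P \<and> (c, [y]) \<in> lift P'} = (\<lambda>z. [z]) ` {c. (x, c) \<in> P \<and> (c, y) \<in> P'}"
  unfolding lift_def by auto

lemma card_lift_comp: "card {c. ([x], c) \<in> lift P \<and> (c, [y]) \<in> lift P'} = card {c. (x, c) \<in> P \<and> (c, y) \<in> P'}"
  unfolding lift_comp by (rule card_image) (auto intro: inj_onI)

lemma not_perm: "\<not> cong_2_permutable H7 Hrels"
proof
  assume cp: "cong_2_permutable H7 Hrels"
  have c1: "cong2 H7 Hrels 1 {as. length as = 1 \<and> set as \<subseteq> H7} (lift Rp)"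
    unfolding cong2_def
    using lift_equiv[OF Rp_H7 Rp_refl Rp_sym Rp_trans] lift_clone[of 0 Rp] Rp_H7
    by (simp add: Hrels_def)
  have c2: "cong2 H7 Hrels 1 {as. length as = 1 \<and> set as \<subseteq> H7} (lift Qp)"
    unfolding cong2_def
    using lift_equiv[OF Qp_H7 Qp_refl Qp_sym Qp_trans] lift_clone[of 1 Qp] Qp_H7
    by (simp add: Hrels_def)
  have "comp2 (lift Rp) (lift Qp) = comp2 (lift Qp) (lift Rp)"
    using cp S1_clone c1 c2 unfolding cong_2_permutable_def by blast
  moreover have "([1],[6]) \<in> comp2 (lift Rp) (lift Qp)"
    unfolding comp2_def using card_lift_comp[where x=1 and y=6 and P=Rp and P'=Qp] cRQ by simp
  moreover have "([1],[6]) \<notin> comp2 (lift Qp) (lift Rp)"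
    unfolding comp2_def using card_lift_comp[where x=1 and y=6 and P=Qp and P'=Rp] cQR by simp
  ultimately show False by simp
qed

theorem mainTheorem15:
  shows "rigid2 H7 Hrels \<and> strongly_2_rectangular H7 Hrels \<and> \<not> cong_2_permutable H7 Hrels
         \<and> (1, 6) \<in> comp2 Rp Qp \<and> (1, 6) \<notin> comp2 Qp Rp"
  using rigid strong not_perm cRQ cQR unfolding comp2_def by simp


end
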